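(* A nanoword over $\alpha$ of length $\le4$ is homotopically skew-symmetric if and only if it is contractible. A nanoword of length $\le4$ is homotopically symmetric if and only if it is contractible or symmetric.
   Context: Fix a set $\alpha$ with an involution $\tau$. An $\alpha$-alphabet is a set $\mathcal A$ with a map $A\mapsto|A|\in\alpha$. A nanoword over $\alpha$ is a pair $(\mathcal A,w)$ with $\mathcal A$ a finite $\alpha$-alphabet and $w$ a word in which each letter of $\mathcal A$ occurs exactly twice; its length is the length of $w$. Nanowords $(\mathcal A_1,w_1),(\mathcal A_2,w_2)$ are isomorphic if a bijection $f:\mathcal A_1\to\mathcal A_2$ with $|f(A)|=|A|$ carries $w_1$ letterwise to $w_2$. Homotopy moves ($x,y,z,t$ words in the remaining letters): (1) $(\mathcal A,xAAy)\mapsto(\mathcal A\setminus\{A\},xy)$; (2) $(\mathcal A,xAByBAz)\mapsto(\mathcal A\setminus\{A,B\},xyz)$ if $|B|=\tau(|A|)$; (3) $(\mathcal A,xAByACzBCt)\mapsto(\mathcal A,xBAyCAzCBt)$ if $A,B,C$ distinct with $|A|=|B|=|C|$. Homotopy ($\simeq$) is generated by isomorphisms, these moves and inverses; contractible means homotopic to the empty nanoword. The opposite of $(\mathcal A,w)$ is $w^-=(\mathcal A,\text{$w$ read backwards})$; the inverse is $\overline w=(\overline{\mathcal A},w)$, where $\overline{\mathcal A}$ is the set $\mathcal A$ with projection $A\mapsto\tau(|A|)$. $w$ is symmetric if it is isomorphic to $w^-$, homotopically symmetric if $w\simeq w^-$, and homotopically skew-symmetric if $w\simeq\overline w^-$.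 *)

theory Defs
  imports Main
begin

text \<open>A nanoword over alpha (elements of type 'a): a finite alphabet of letters
  (letters drawn from nat), a projection of letters to alpha, and a word.\<close>
type_synonym 'a nanoword = "nat set \<times> (nat \<Rightarrow> 'a) \<times> nat list"

definition is_nanoword :: "'a nanoword \<Rightarrow> bool" where
  "is_nanoword n = (case n of (A, p, w) \<Rightarrow>
     finite A \<and> set w \<subseteq> A \<and> (\<forall>x\<in>A. count_list w x = 2))"

definition nw_length :: "'a nanoword \<Rightarrow> nat" where
  "nw_length n = length (snd (snd n))"

definition nw_iso :: "'a nanoword \<Rightarrow> 'a nanoword \<Rightarrow> bool" where
  "nw_iso n1 n2 = (case n1 of (A1, p1, w1) \<Rightarrow> case n2 of (A2, p2, w2) \<Rightarrow>
     (\<exists>f. bij_betw f A1 A2 \<and> (\<forall>a\<in>A1. p2 (f a) = p1 a) \<and> map f w1 = w2))"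

inductive hstep :: "('a \<Rightarrow> 'a) \<Rightarrow> 'a nanoword \<Rightarrow> 'a nanoword \<Rightarrow> bool" for \<tau> where
  iso: "is_nanoword n1 \<Longrightarrow> is_nanoword n2 \<Longrightarrow> nw_iso n1 n2 \<Longrightarrow> hstep \<tau> n1 n2"
| H1: "is_nanoword (A, p, x @ [a, a] @ y) \<Longrightarrow>
       hstep \<tau> (A, p, x @ [a, a] @ y) (A - {a}, p, x @ y)"
| H2: "is_nanoword (A, p, x @ [a, b] @ y @ [b, a] @ z) \<Longrightarrow> p b = \<tau> (p a) \<Longrightarrow>
       hstep \<tau> (A, p, x @ [a, b] @ y @ [b, a] @ z) (A - {a, b}, p, x @ y @ z)"
| H3: "is_nanoword (A, p, x @ [a, b] @ y @ [a, c] @ z @ [b, c] @ t) \<Longrightarrow>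
       distinct [a, b, c] \<Longrightarrow> p a = p b \<Longrightarrow> p b = p c \<Longrightarrow>
       hstep \<tau> (A, p, x @ [a, b] @ y @ [a, c] @ z @ [b, c] @ t)
               (A, p, x @ [b, a] @ y @ [c, a] @ z @ [c, b] @ t)"

definition homotopic :: "('a \<Rightarrow> 'a) \<Rightarrow> 'a nanoword \<Rightarrow> 'a nanoword \<Rightarrow> bool" where
  "homotopic \<tau> = (symclp (hstep \<tau>))\<^sup>*\<^sup>*"

definition empty_nanoword :: "'a nanoword" where
  "empty_nanoword = ({}, (\<lambda>_. undefined), [])"

definition contractible :: "('a \<Rightarrow> 'a) \<Rightarrow> 'a nanoword \<Rightarrow> bool" where
  "contractible \<tau> n = homotopic \<tau> n empty_nanoword"

definition nw_opposite :: "'a nanoword \<Rightarrow> 'a nanoword" where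
  "nw_opposite n = (case n of (A, p, w) \<Rightarrow> (A, p, rev w))"

definition nw_inverse :: "('a \<Rightarrow> 'a) \<Rightarrow> 'a nanoword \<Rightarrow> 'a nanoword" where
  "nw_inverse \<tau> n = (case n of (A, p, w) \<Rightarrow> (A, \<tau> \<circ> p, w))"

definition nw_symmetric :: "'a nanoword \<Rightarrow> bool" where
  "nw_symmetric n = nw_iso n (nw_opposite n)"

definition homot_symmetric :: "('a \<Rightarrow> 'a) \<Rightarrow> 'a nanoword \<Rightarrow> bool" where
  "homot_symmetric \<tau> n = homotopic \<tau> n (nw_opposite n)"

definition homot_skew_symmetric :: "('a \<Rightarrow> 'a) \<Rightarrow> 'a nanoword \<Rightarrow> bool" where
  "homot_skew_symmetric \<tau> n = homotopic \<tau> n (nw_opposite (nw_inverse \<tau> n))"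

end

theory Submission
  imports Defs
begin


lemma nw_set: "is_nanoword (A, p, w) \<Longrightarrow> set w = A"
  unfolding is_nanoword_def using count_notin by fastforce

lemma nw_count: "is_nanoword (A, p, w) \<Longrightarrow> u \<in> set w \<Longrightarrow> count_list w u = 2"
  unfolding is_nanoword_def by auto

lemma nw_p_indep: "is_nanoword (A, p, w) \<Longrightarrow> is_nanoword (A, q, w)"
  unfolding is_nanoword_def by auto

lemma homotopic_refl: "homotopic \<tau> n n"
  unfolding homotopic_def by simp

lemma homotopic_step: "hstep \<tau> n m \<Longrightarrow> homotopic \<tau> n m"
  unfolding homotopic_def by (simp add: r_into_rtranclp symclpI)

lemma homotopic_step_rev: "hstep \<tau> m n \<Longrightarrow> homotopic \<tau> n m"
  unfolding homotopic_def by (simp add: r_into_rtranclp symclpI)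

lemma homotopic_trans: "homotopic \<tau> n m \<Longrightarrow> homotopic \<tau> m k \<Longrightarrow> homotopic \<tau> n k"
  unfolding homotopic_def by simp

lemma homotopic_sym: "homotopic \<tau> n m \<Longrightarrow> homotopic \<tau> m n"
  unfolding homotopic_def
  by (metis rtranclp_symclp_sym)

lemma homotopic_map:
  assumes "\<And>n m. hstep \<tau> n m \<Longrightarrow> hstep \<tau> (F n) (F m)"
  shows "homotopic \<tau> n m \<Longrightarrow> homotopic \<tau> (F n) (F m)"
  unfolding homotopic_def
proof (induction rule: rtranclp_induct)
  case base then show ?case by simp
next
  case (step y z)
  then have "symclp (hstep \<tau>) (F y) (F z)" using assms[of y z] assms[of z y] by (auto simp: symclp_def)
  then show ?case using step by simp
qed

lemma homotopic_inv:
  assumes "\<And>n m. hstep \<tau> n m \<Longrightarrow> I n = I m"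
  shows "homotopic \<tau> n m \<Longrightarrow> I n = I m"
  unfolding homotopic_def
proof (induction rule: rtranclp_induct)
  case base then show ?case by simp
next
  case (step y z)
  then show ?case using assms[of y z] assms[of z y] by (auto simp: symclp_def)
qed

lemma is_nanoword_rev: "is_nanoword (A, p, w) \<Longrightarrow> is_nanoword (A, p, rev w)"
  unfolding is_nanoword_def by auto

lemma hstep_opp: "hstep \<tau> n m \<Longrightarrow> hstep \<tau> (nw_opposite n) (nw_opposite m)"
proof (induction rule: hstep.induct)
  case (iso n1 n2)
  obtain A1 p1 w1 where n1: "n1 = (A1,p1,w1)" by (cases n1) auto
  obtain A2 p2 w2 where n2: "n2 = (A2,p2,w2)" by (cases n2) auto
  show ?case using iso unfolding n1 n2 nw_opposite_def
    by (intro hstep.iso) (auto simp: is_nanoword_rev nw_iso_def rev_map[symmetric])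
next
  case (H1 A p x a y)
  have "hstep \<tau> (A, p, rev y @ [a, a] @ rev x) (A - {a}, p, rev y @ rev x)"
    by (rule hstep.H1) (use H1 is_nanoword_rev in fastforce)
  then show ?case by (simp add: nw_opposite_def)
next
  case (H2 A p x a b y z)
  have "hstep \<tau> (A, p, rev z @ [a, b] @ rev y @ [b, a] @ rev x) (A - {a, b}, p, rev z @ rev y @ rev x)"
    by (rule hstep.H2) (use H2 is_nanoword_rev in fastforce)+
  then show ?case by (simp add: nw_opposite_def)
next
  case (H3 A p x a b y c z t)
  have "hstep \<tau> (A, p, rev t @ [c, b] @ rev z @ [c, a] @ rev y @ [b, a] @ rev x)
               (A, p, rev t @ [b, c] @ rev z @ [a, c] @ rev y @ [a, b] @ rev x)"
    by (rule hstep.H3) (use H3 is_nanoword_rev in fastforce)+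
  then show ?case by (simp add: nw_opposite_def)
qed

lemma hstep_inverse: "hstep \<tau> n m \<Longrightarrow> hstep \<tau> (nw_inverse \<tau> n) (nw_inverse \<tau> m)"
proof (induction rule: hstep.induct)
  case (iso n1 n2)
  obtain A1 p1 w1 where n1: "n1 = (A1,p1,w1)" by (cases n1) auto
  obtain A2 p2 w2 where n2: "n2 = (A2,p2,w2)" by (cases n2) auto
  show ?case using iso unfolding n1 n2 nw_inverse_def
    by (intro hstep.iso) (auto simp: is_nanoword_def nw_iso_def)
next
  case (H1 A p x a y)
  show ?case unfolding nw_inverse_def
    using hstep.H1[OF nw_p_indep[OF H1, of "\<tau> \<circ> p"]] by simp
next
  case (H2 A p x a b y z)
  show ?case unfolding nw_inverse_def
    using hstep.H2[OF nw_p_indep[OF H2(1), of "\<tau> \<circ> p"]] H2(2) by simp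
next
  case (H3 A p x a b y c z t)
  show ?case unfolding nw_inverse_def
    using hstep.H3[OF nw_p_indep[OF H3(1), of "\<tau> \<circ> p"]] H3(2-) by simp
qed



definition lk :: "nat list \<Rightarrow> nat \<Rightarrow> nat \<Rightarrow> bool" where
  "lk w u v \<longleftrightarrow> filter (\<lambda>c. c = u \<or> c = v) w = [u,v,u,v]"

lemma filt_none: "a \<notin> set x \<Longrightarrow> b \<notin> set x \<Longrightarrow> filter (\<lambda>c. c = a \<or> c = b) x = []"
  by (induction x) auto

lemma filt_one1: "a \<notin> set x \<Longrightarrow> filter (\<lambda>c. c = u \<or> c = a) x = filter (\<lambda>c. c = u) x"
  by (induction x) auto
lemma filt_one2: "a \<notin> set x \<Longrightarrow> filter (\<lambda>c. c = a \<or> c = u) x = filter (\<lambda>c. c = u) x"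
  by (induction x) auto

lemma filt_u: "\<forall>c\<in>set (filter (\<lambda>c. c = u) x). c = u" by auto

lemma filt_none1: "a \<notin> set x \<Longrightarrow> filter (\<lambda>c. c = a) x = []"
  by (induction x) auto

lemma split_first: "a \<notin> set X \<Longrightarrow> a \<notin> set X' \<Longrightarrow> (X @ a # R = X' @ a # R') \<longleftrightarrow> (X = X' \<and> R = R')"
proof (induction X arbitrary: X')
  case Nil then show ?case by (cases X') auto
next
  case (Cons c X) then show ?case by (cases X') auto
qed

lemma pat_lemma:
  assumes "\<forall>c\<in>set X. c = u" "\<forall>c\<in>set Y. c = u" "u \<noteq> a"
  shows "(X @ a # Y @ a # Z = [u,a,u,a]) \<longleftrightarrow> (X = [u] \<and> Y = [u] \<and> Z = [])"
    and "(X @ a # Y @ a # Z = [a,u,a,u]) \<longleftrightarrow> (X = [] \<and> Y = [u] \<and> Z = [u])"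
proof -
  have aX: "a \<notin> set X" and aY: "a \<notin> set Y" using assms by auto
  have "(X @ a # Y @ a # Z = [u,a,u,a]) \<longleftrightarrow> (X = [u] \<and> Y @ a # Z = [u] @ a # [])"
    using split_first[OF aX, of "[u]" "Y @ a # Z" "[u,a]"] assms(3) by auto
  also have "\<dots> \<longleftrightarrow> (X = [u] \<and> Y = [u] \<and> Z = [])"
    using split_first[OF aY, of "[u]" Z "[]"] assms(3) by auto
  finally show "(X @ a # Y @ a # Z = [u,a,u,a]) \<longleftrightarrow> (X = [u] \<and> Y = [u] \<and> Z = [])" .
  have "(X @ a # Y @ a # Z = [a,u,a,u]) \<longleftrightarrow> (X = [] \<and> Y @ a # Z = [u] @ a # [u])"
    using split_first[OF aX, of "[]" "Y @ a # Z" "[u,a,u]"] assms(3) by auto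
  also have "\<dots> \<longleftrightarrow> (X = [] \<and> Y = [u] \<and> Z = [u])"
    using split_first[OF aY, of "[u]" Z "[u]"] assms(3) by auto
  finally show "(X @ a # Y @ a # Z = [a,u,a,u]) \<longleftrightarrow> (X = [] \<and> Y = [u] \<and> Z = [u])" .
qed

lemma H1_lk:
  assumes "a \<notin> set x" "a \<notin> set y"
  shows "u \<noteq> a \<Longrightarrow> v \<noteq> a \<Longrightarrow> lk (x @ [a,a] @ y) u v = lk (x @ y) u v"
    and "\<not> lk (x @ [a,a] @ y) a v"
    and "\<not> lk (x @ [a,a] @ y) u a"
proof -
  show "u \<noteq> a \<Longrightarrow> v \<noteq> a \<Longrightarrow> lk (x @ [a,a] @ y) u v = lk (x @ y) u v"
    by (simp add: lk_def)
  show "\<not> lk (x @ [a,a] @ y) a v"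
  proof (cases "v = a")
    case True then show ?thesis using assms
      by (simp add: lk_def filt_none1)
  next
    case False
    then show ?thesis using assms pat_lemma(2)[where X="filter (\<lambda>c. c = v) x" and u=v and Y="[]" and Z="filter (\<lambda>c. c = v) y" and a=a]
      by (simp add: lk_def filt_one2)
  qed
  show "\<not> lk (x @ [a,a] @ y) u a"
  proof (cases "u = a")
    case True then show ?thesis using assms
      by (simp add: lk_def filt_none1)
  next
    case False
    then show ?thesis using assms pat_lemma(1)[where X="filter (\<lambda>c. c = u) x" and u=u and Y="[]" and Z="filter (\<lambda>c. c = u) y" and a=a]
      by (simp add: lk_def filt_one1)
  qed
qed

lemma H2_lk:
  assumes "a \<notin> set x" "a \<notin> set y" "a \<notin> set z" "b \<notin> set x" "b \<notin> set y" "b \<notin> set z" "a \<noteq> b"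
  defines "W \<equiv> x @ [a,b] @ y @ [b,a] @ z"
  shows "u \<notin> {a,b} \<Longrightarrow> v \<notin> {a,b} \<Longrightarrow> lk W u v = lk (x @ y @ z) u v"
    and "u \<notin> {a,b} \<Longrightarrow> lk W u a = lk W u b"
    and "u \<notin> {a,b} \<Longrightarrow> lk W a u = lk W b u"
    and "\<not> lk W a a" "\<not> lk W b b" "\<not> lk W a b" "\<not> lk W b a"
proof -
  show "u \<notin> {a,b} \<Longrightarrow> v \<notin> {a,b} \<Longrightarrow> lk W u v = lk (x @ y @ z) u v"
    by (simp add: lk_def W_def)
  show "u \<notin> {a,b} \<Longrightarrow> lk W u a = lk W u b"
  proof -
    assume u: "u \<notin> {a,b}"
    have "lk W u a \<longleftrightarrow> (filter (\<lambda>c. c = u) x = [u] \<and> filter (\<lambda>c. c = u) y = [u] \<and> filter (\<lambda>c. c = u) z = [])"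
      unfolding lk_def W_def using assms u by (simp add: filt_one1 pat_lemma(1))
    moreover have "lk W u b \<longleftrightarrow> (filter (\<lambda>c. c = u) x = [u] \<and> filter (\<lambda>c. c = u) y = [u] \<and> filter (\<lambda>c. c = u) z = [])"
      unfolding lk_def W_def using assms u by (simp add: filt_one1 pat_lemma(1))
    ultimately show ?thesis by simp
  qed
  show "u \<notin> {a,b} \<Longrightarrow> lk W a u = lk W b u"
  proof -
    assume u: "u \<notin> {a,b}"
    have "lk W a u \<longleftrightarrow> (filter (\<lambda>c. c = u) x = [] \<and> filter (\<lambda>c. c = u) y = [u] \<and> filter (\<lambda>c. c = u) z = [u])"
      unfolding lk_def W_def using assms u by (simp add: filt_one2 pat_lemma(2))
    moreover have "lk W b u \<longleftrightarrow> (filter (\<lambda>c. c = u) x = [] \<and> filter (\<lambda>c. c = u) y = [u] \<and> filter (\<lambda>c. c = u) z = [u])"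
      unfolding lk_def W_def using assms u by (simp add: filt_one2 pat_lemma(2))
    ultimately show ?thesis by simp
  qed
  show "\<not> lk W a a" "\<not> lk W b b" "\<not> lk W a b" "\<not> lk W b a"
    using assms by (simp_all add: lk_def W_def filt_none filt_none1)
qed

lemma filt_swap: "\<not> (P a \<and> P b) \<Longrightarrow> filter P [a,b] = filter P [b,a]"
  by auto

lemma H3_lk:
  assumes "a \<notin> set x" "a \<notin> set y" "a \<notin> set z" "a \<notin> set t"
    "b \<notin> set x" "b \<notin> set y" "b \<notin> set z" "b \<notin> set t"
    "c \<notin> set x" "c \<notin> set y" "c \<notin> set z" "c \<notin> set t" "distinct [a,b,c]"
  defines "W \<equiv> x @ [a,b] @ y @ [a,c] @ z @ [b,c] @ t"
    and "W' \<equiv> x @ [b,a] @ y @ [c,a] @ z @ [c,b] @ t"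
  shows "\<not> (u \<in> {a,b,c} \<and> v \<in> {a,b,c}) \<Longrightarrow> lk W u v = lk W' u v"
    and "lk W a b" "\<not> lk W a a" "\<not> lk W a c" "\<not> lk W b a" "\<not> lk W b b" "lk W b c"
        "\<not> lk W c a" "\<not> lk W c b" "\<not> lk W c c"
    and "\<not> lk W' a b" "\<not> lk W' a a" "lk W' a c" "\<not> lk W' b a" "\<not> lk W' b b" "\<not> lk W' b c"
        "\<not> lk W' c a" "\<not> lk W' c b" "\<not> lk W' c c"
proof -
  assume "\<not> (u \<in> {a,b,c} \<and> v \<in> {a,b,c})"
  then have "filter (\<lambda>e. e = u \<or> e = v) W = filter (\<lambda>e. e = u \<or> e = v) W'"
    unfolding W_def W'_def using assms(13)
    by (simp only: filter_append filt_swap[of "\<lambda>e. e = u \<or> e = v"]) auto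
  then show "lk W u v = lk W' u v" by (simp add: lk_def)
next
  show "lk W a b" "\<not> lk W a a" "\<not> lk W a c" "\<not> lk W b a" "\<not> lk W b b" "lk W b c"
        "\<not> lk W c a" "\<not> lk W c b" "\<not> lk W c c"
    and "\<not> lk W' a b" "\<not> lk W' a a" "lk W' a c" "\<not> lk W' b a" "\<not> lk W' b b" "\<not> lk W' b c"
        "\<not> lk W' c a" "\<not> lk W' c b" "\<not> lk W' c c"
    using assms by (simp_all add: lk_def W_def W'_def filt_none filt_none1)
qed




lemma nw_H1_facts:
  assumes "is_nanoword (A, p, x @ [a,a] @ y)"
  shows "a \<notin> set x" "a \<notin> set y"
proof -
  have "count_list (x @ [a,a] @ y) a = 2" using nw_count[OF assms, of a] by simp
  then show "a \<notin> set x" "a \<notin> set y" by (simp_all add: count_list_0_iff[symmetric])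
qed

lemma nw_H2_facts:
  assumes "is_nanoword (A, p, x @ [a,b] @ y @ [b,a] @ z)"
  shows "a \<notin> set x" "a \<notin> set y" "a \<notin> set z" "b \<notin> set x" "b \<notin> set y" "b \<notin> set z" "a \<noteq> b"
proof -
  have ca: "count_list (x @ [a,b] @ y @ [b,a] @ z) a = 2" using nw_count[OF assms, of a] by simp
  have cb: "count_list (x @ [a,b] @ y @ [b,a] @ z) b = 2" using nw_count[OF assms, of b] by simp
  show "a \<noteq> b" using ca by auto
  then show "a \<notin> set x" "a \<notin> set y" "a \<notin> set z" "b \<notin> set x" "b \<notin> set y" "b \<notin> set z"
    using ca cb by (simp_all add: count_list_0_iff[symmetric])
qed

lemma nw_H3_facts:
  assumes "is_nanoword (A, p, x @ [a,b] @ y @ [a,c] @ z @ [b,c] @ t)" "distinct [a,b,c]"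
  shows "a \<notin> set x" "a \<notin> set y" "a \<notin> set z" "a \<notin> set t"
    "b \<notin> set x" "b \<notin> set y" "b \<notin> set z" "b \<notin> set t"
    "c \<notin> set x" "c \<notin> set y" "c \<notin> set z" "c \<notin> set t"
proof -
  have ca: "count_list (x @ [a,b] @ y @ [a,c] @ z @ [b,c] @ t) a = 2" using nw_count[OF assms(1), of a] by simp
  have cb: "count_list (x @ [a,b] @ y @ [a,c] @ z @ [b,c] @ t) b = 2" using nw_count[OF assms(1), of b] by simp
  have cc: "count_list (x @ [a,b] @ y @ [a,c] @ z @ [b,c] @ t) c = 2" using nw_count[OF assms(1), of c] by simp
  show "a \<notin> set x" "a \<notin> set y" "a \<notin> set z" "a \<notin> set t"
    "b \<notin> set x" "b \<notin> set y" "b \<notin> set z" "b \<notin> set t"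
    "c \<notin> set x" "c \<notin> set y" "c \<notin> set z" "c \<notin> set t"
    using ca cb cc assms(2) by (simp_all add: count_list_0_iff[symmetric])
qed

definition PC :: "'a set \<Rightarrow> 'a set \<Rightarrow> (nat \<Rightarrow> 'a) \<Rightarrow> nat list \<Rightarrow> nat" where
  "PC S T p w = (\<Sum>u\<in>set w. \<Sum>v\<in>set w. if lk w u v \<and> p u \<in> S \<and> p v \<in> T then 1 else 0)"

lemma PC_H1:
  assumes "a \<notin> set x" "a \<notin> set y"
  shows "PC S T p (x @ [a,a] @ y) = PC S T p (x @ y)"
proof -
  let ?W = "x @ [a,a] @ y" and ?U = "set (x @ y)"
  let ?F = "\<lambda>w u v. if lk w u v \<and> p u \<in> S \<and> p v \<in> T then 1 else (0::nat)"
  have sW: "set ?W = insert a ?U" by auto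
  have aU: "a \<notin> ?U" using assms by auto
  have "PC S T p ?W = (\<Sum>u\<in>insert a ?U. ?F ?W u a + (\<Sum>v\<in>?U. ?F ?W u v))"
    unfolding PC_def sW using aU by (simp add: sum.insert)
  also have "\<dots> = (?F ?W a a + (\<Sum>v\<in>?U. ?F ?W a v)) + (\<Sum>u\<in>?U. ?F ?W u a + (\<Sum>v\<in>?U. ?F ?W u v))"
    using aU by (simp add: sum.insert)
  also have "\<dots> = (\<Sum>u\<in>?U. (\<Sum>v\<in>?U. ?F (x @ y) u v))"
  proof -
    have *: "?F ?W u v = ?F (x @ y) u v" if "u \<in> ?U" "v \<in> ?U" for u v
    proof -
      have "u \<noteq> a" "v \<noteq> a" using that aU by auto
      then show ?thesis using H1_lk(1)[OF assms, of u v] by simp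
    qed
    have "(\<Sum>u\<in>?U. \<Sum>v\<in>?U. ?F ?W u v) = (\<Sum>u\<in>?U. \<Sum>v\<in>?U. ?F (x @ y) u v)"
      by (intro sum.cong refl, rule *, assumption+)
    then show ?thesis using H1_lk(2,3)[OF assms] by simp
  qed
  finally show ?thesis unfolding PC_def by simp
qed

lemma PC_H2:
  assumes "a \<notin> set x" "a \<notin> set y" "a \<notin> set z" "b \<notin> set x" "b \<notin> set y" "b \<notin> set z" "a \<noteq> b"
    and pS: "p a \<in> S \<longleftrightarrow> p b \<in> S" and pT: "p a \<in> T \<longleftrightarrow> p b \<in> T"
  shows "even (PC S T p (x @ [a,b] @ y @ [b,a] @ z)) = even (PC S T p (x @ y @ z))"
proof -
  let ?W = "x @ [a,b] @ y @ [b,a] @ z" and ?U = "set (x @ y @ z)"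
  let ?F = "\<lambda>w u v. if lk w u v \<and> p u \<in> S \<and> p v \<in> T then 1 else (0::nat)"
  note L = H2_lk[OF assms(1-7)]
  have sW: "set ?W = insert a (insert b ?U)" by auto
  have aU: "a \<notin> ?U" "b \<notin> ?U" using assms by auto
  have "PC S T p ?W = (\<Sum>u\<in>insert a (insert b ?U). ?F ?W u a + (?F ?W u b + (\<Sum>v\<in>?U. ?F ?W u v)))"
    unfolding PC_def sW using aU assms(7) by (simp add: sum.insert)
  also have "\<dots> = (?F ?W a a + (?F ?W a b + (\<Sum>v\<in>?U. ?F ?W a v))) +
       ((?F ?W b a + (?F ?W b b + (\<Sum>v\<in>?U. ?F ?W b v))) +
        (\<Sum>u\<in>?U. ?F ?W u a + (?F ?W u b + (\<Sum>v\<in>?U. ?F ?W u v))))"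
    using aU assms(7) by (simp add: sum.insert)
  also have "\<dots> = 2 * (\<Sum>v\<in>?U. ?F ?W a v) + (\<Sum>u\<in>?U. 2 * ?F ?W u a + (\<Sum>v\<in>?U. ?F (x @ y @ z) u v))"
  proof -
    have 1: "?F ?W b v = ?F ?W a v" if "v \<in> ?U" for v
    proof -
      have "v \<notin> {a,b}" using that aU by auto
      then show ?thesis using L(3)[of v] pS by simp
    qed
    have 2: "?F ?W u b = ?F ?W u a" if "u \<in> ?U" for u
    proof -
      have "u \<notin> {a,b}" using that aU by auto
      then show ?thesis using L(2)[of u] pT by simp
    qed
    have 3: "?F ?W u v = ?F (x @ y @ z) u v" if "u \<in> ?U" "v \<in> ?U" for u v
    proof -
      have "u \<notin> {a,b}" "v \<notin> {a,b}" using that aU by auto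
      then show ?thesis using L(1)[of u v] by simp
    qed
    have "(\<Sum>v\<in>?U. ?F ?W b v) = (\<Sum>v\<in>?U. ?F ?W a v)"
      by (intro sum.cong refl, rule 1, assumption)
    moreover have "(\<Sum>u\<in>?U. ?F ?W u a + (?F ?W u b + (\<Sum>v\<in>?U. ?F ?W u v))) =
        (\<Sum>u\<in>?U. 2 * ?F ?W u a + (\<Sum>v\<in>?U. ?F (x @ y @ z) u v))"
    proof (intro sum.cong refl)
      fix u assume u: "u \<in> ?U"
      have "(\<Sum>v\<in>?U. ?F ?W u v) = (\<Sum>v\<in>?U. ?F (x @ y @ z) u v)"
        by (intro sum.cong refl, rule 3, rule u, assumption)
      then show "?F ?W u a + (?F ?W u b + (\<Sum>v\<in>?U. ?F ?W u v)) =
          2 * ?F ?W u a + (\<Sum>v\<in>?U. ?F (x @ y @ z) u v)" using 2[OF u] by simp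
    qed
    ultimately show ?thesis using L(4-7) by simp
  qed
  finally have "PC S T p ?W = 2 * ((\<Sum>v\<in>?U. ?F ?W a v) + (\<Sum>u\<in>?U. ?F ?W u a)) + PC S T p (x @ y @ z)"
    unfolding PC_def by (simp add: sum.distrib sum_distrib_left algebra_simps)
  then show ?thesis by simp
qed

lemma PC_H3:
  assumes "a \<notin> set x" "a \<notin> set y" "a \<notin> set z" "a \<notin> set t"
    "b \<notin> set x" "b \<notin> set y" "b \<notin> set z" "b \<notin> set t"
    "c \<notin> set x" "c \<notin> set y" "c \<notin> set z" "c \<notin> set t" "distinct [a,b,c]"
    and "p a = p b" "p b = p c" and ST: "S \<inter> T = {}"
  shows "PC S T p (x @ [a,b] @ y @ [a,c] @ z @ [b,c] @ t) = PC S T p (x @ [b,a] @ y @ [c,a] @ z @ [c,b] @ t)"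
proof -
  let ?W = "x @ [a,b] @ y @ [a,c] @ z @ [b,c] @ t" and ?W' = "x @ [b,a] @ y @ [c,a] @ z @ [c,b] @ t"
  let ?F = "\<lambda>w u v. if lk w u v \<and> p u \<in> S \<and> p v \<in> T then 1 else (0::nat)"
  have sW: "set ?W' = set ?W" by auto
  have *: "?F ?W u v = ?F ?W' u v" for u v
  proof (cases "u \<in> {a,b,c} \<and> v \<in> {a,b,c}")
    case True
    then have "p u = p v" using assms(14,15) by auto
    then have "\<not> (p u \<in> S \<and> p v \<in> T)" using ST by auto
    then show ?thesis by simp
  next
    case False
    then show ?thesis using H3_lk(1)[OF assms(1-13), of u v] by simp
  qed
  show ?thesis unfolding PC_def sW using * by simp
qed

lemma lk_map:
  assumes inj: "inj_on h (set w)" and uv: "u \<in> set w" "v \<in> set w"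
  shows "lk (map h w) (h u) (h v) = lk w u v"
proof -
  have "filter (\<lambda>c. c = h u \<or> c = h v) (map h w) = map h (filter (\<lambda>c. h c = h u \<or> h c = h v) w)"
    by (simp add: filter_map o_def)
  also have "filter (\<lambda>c. h c = h u \<or> h c = h v) w = filter (\<lambda>c. c = u \<or> c = v) w"
    using inj uv by (intro filter_cong refl) (metis inj_on_eq_iff)
  finally have e: "filter (\<lambda>c. c = h u \<or> c = h v) (map h w) = map h (filter (\<lambda>c. c = u \<or> c = v) w)" .
  have i: "inj_on h (set (filter (\<lambda>c. c = u \<or> c = v) w) \<union> set [u,v,u,v])"
    using inj uv by (elim inj_on_subset) auto
  have "map h (filter (\<lambda>c. c = u \<or> c = v) w) = map h [u,v,u,v] \<longleftrightarrow> filter (\<lambda>c. c = u \<or> c = v) w = [u,v,u,v]"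
    by (rule inj_on_map_eq_map[OF i])
  then show ?thesis unfolding lk_def e by simp
qed

lemma PC_map:
  assumes inj: "inj_on h (set w)" and q: "\<forall>u\<in>set w. q (h u) = p u"
  shows "PC S T q (map h w) = PC S T p w"
proof -
  have "PC S T q (map h w) = (\<Sum>u\<in>h ` set w. \<Sum>v\<in>h ` set w. if lk (map h w) u v \<and> q u \<in> S \<and> q v \<in> T then 1 else 0)"
    unfolding PC_def by simp
  also have "\<dots> = (\<Sum>u\<in>set w. \<Sum>v\<in>set w. if lk (map h w) (h u) (h v) \<and> q (h u) \<in> S \<and> q (h v) \<in> T then 1 else 0)"
    using inj by (simp add: sum.reindex)
  also have "\<dots> = PC S T p w"
    unfolding PC_def using inj q lk_map[OF inj] by (intro sum.cong refl) simp
  finally show ?thesis .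
qed

definition sg :: "nat list \<Rightarrow> nat \<Rightarrow> nat \<Rightarrow> int" where
  "sg w u v = (if lk w u v then 1 else if lk w v u then -1 else 0)"

definition NN :: "('a \<Rightarrow> int) \<Rightarrow> (nat \<Rightarrow> 'a) \<Rightarrow> nat list \<Rightarrow> nat \<Rightarrow> int" where
  "NN g p w u = (\<Sum>v\<in>set w. sg w u v * g (p v))"

definition TI :: "('a \<Rightarrow> int) \<Rightarrow> ('a \<Rightarrow> int) \<Rightarrow> (int \<Rightarrow> int) \<Rightarrow> (nat \<Rightarrow> 'a) \<Rightarrow> nat list \<Rightarrow> int" where
  "TI f g \<phi> p w = (\<Sum>u\<in>set w. f (p u) * \<phi> (NN g p w u))"

lemma TI_map:
  assumes inj: "inj_on h (set w)" and q: "\<forall>u\<in>set w. q (h u) = p u"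
  shows "TI f g \<phi> q (map h w) = TI f g \<phi> p w"
proof -
  have sg: "sg (map h w) (h u) (h v) = sg w u v" if "u \<in> set w" "v \<in> set w" for u v
    unfolding sg_def using lk_map[OF inj] that by simp
  have N: "NN g q (map h w) (h u) = NN g p w u" if "u \<in> set w" for u
  proof -
    have "NN g q (map h w) (h u) = (\<Sum>v\<in>h ` set w. sg (map h w) (h u) v * g (q v))"
      unfolding NN_def by simp
    also have "\<dots> = (\<Sum>v\<in>set w. sg (map h w) (h u) (h v) * g (q (h v)))"
      using inj by (simp add: sum.reindex)
    also have "\<dots> = NN g p w u"
      unfolding NN_def using sg that q by (intro sum.cong refl) simp
    finally show ?thesis .
  qed
  have "TI f g \<phi> q (map h w) = (\<Sum>u\<in>h ` set w. f (q u) * \<phi> (NN g q (map h w) u))"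
    unfolding TI_def by simp
  also have "\<dots> = (\<Sum>u\<in>set w. f (q (h u)) * \<phi> (NN g q (map h w) (h u)))"
    using inj by (simp add: sum.reindex)
  also have "\<dots> = TI f g \<phi> p w"
    unfolding TI_def using N q by (intro sum.cong refl) simp
  finally show ?thesis .
qed



lemma TI_H1:
  assumes "a \<notin> set x" "a \<notin> set y" "\<phi> 0 = 0"
  shows "TI f g \<phi> p (x @ [a,a] @ y) = TI f g \<phi> p (x @ y)"
proof -
  let ?W = "x @ [a,a] @ y" and ?U = "set (x @ y)"
  note L = H1_lk[OF assms(1,2)]
  have sW: "set ?W = insert a ?U" by auto
  have aU: "a \<notin> ?U" using assms by auto
  have sga: "sg ?W a v = 0" "sg ?W v a = 0" for v using L(2,3) unfolding sg_def by auto
  have sgU: "sg ?W u v = sg (x @ y) u v" if "u \<in> ?U" "v \<in> ?U" for u v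
  proof -
    have "u \<noteq> a" "v \<noteq> a" using that aU by auto
    then show ?thesis unfolding sg_def using L(1)[of u v] L(1)[of v u] by simp
  qed
  have Na: "NN g p ?W a = 0" unfolding NN_def using sga by simp
  have NU: "NN g p ?W u = NN g p (x @ y) u" if u: "u \<in> ?U" for u
  proof -
    have "NN g p ?W u = sg ?W u a * g (p a) + (\<Sum>v\<in>?U. sg ?W u v * g (p v))"
      unfolding NN_def sW using aU by (simp add: sum.insert)
    also have "\<dots> = (\<Sum>v\<in>?U. sg ?W u v * g (p v))"
      using sga(2)[of u] by simp
    also have "\<dots> = (\<Sum>v\<in>?U. sg (x @ y) u v * g (p v))"
      by (rule sum.cong[OF refl]) (simp only: sgU[OF u])
    finally show ?thesis unfolding NN_def by simp
  qed
  have "TI f g \<phi> p ?W = f (p a) * \<phi> (NN g p ?W a) + (\<Sum>u\<in>?U. f (p u) * \<phi> (NN g p ?W u))"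
    unfolding TI_def sW using aU by (simp add: sum.insert)
  also have "\<dots> = (\<Sum>u\<in>?U. f (p u) * \<phi> (NN g p ?W u))"
    using Na assms(3) by simp
  also have "\<dots> = (\<Sum>u\<in>?U. f (p u) * \<phi> (NN g p (x @ y) u))"
    by (rule sum.cong[OF refl]) (simp only: NU)
  finally show ?thesis unfolding TI_def by simp
qed

lemma TI_H2:
  assumes "a \<notin> set x" "a \<notin> set y" "a \<notin> set z" "b \<notin> set x" "b \<notin> set y" "b \<notin> set z" "a \<noteq> b"
    and gb: "g (p b) = - g (p a)" and fb: "f (p b) = - f (p a)"
  shows "TI f g \<phi> p (x @ [a,b] @ y @ [b,a] @ z) = TI f g \<phi> p (x @ y @ z)"
proof -
  let ?W = "x @ [a,b] @ y @ [b,a] @ z" and ?U = "set (x @ y @ z)"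
  note L = H2_lk[OF assms(1-7)]
  have sW: "set ?W = insert a (insert b ?U)" by auto
  have aU: "a \<notin> ?U" "b \<notin> ?U" using assms by auto
  have sgab: "sg ?W a a = 0" "sg ?W a b = 0" "sg ?W b a = 0" "sg ?W b b = 0"
    using L(4-7) unfolding sg_def by auto
  have sgU: "sg ?W u v = sg (x @ y @ z) u v" if "u \<in> ?U" "v \<in> ?U" for u v
  proof -
    have "u \<notin> {a,b}" "v \<notin> {a,b}" using that aU by auto
    then show ?thesis unfolding sg_def using L(1)[of u v] L(1)[of v u] by simp
  qed
  have sg1: "sg ?W u a = sg ?W u b" "sg ?W a u = sg ?W b u" if "u \<in> ?U" for u
  proof -
    have "u \<notin> {a,b}" using that aU by auto
    then show "sg ?W u a = sg ?W u b" "sg ?W a u = sg ?W b u"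
      unfolding sg_def using L(2)[of u] L(3)[of u] by simp_all
  qed
  have NU: "NN g p ?W u = NN g p (x @ y @ z) u" if u: "u \<in> ?U" for u
  proof -
    have "NN g p ?W u = sg ?W u a * g (p a) + (sg ?W u b * g (p b) + (\<Sum>v\<in>?U. sg ?W u v * g (p v)))"
      unfolding NN_def sW using aU assms(7) by (simp add: sum.insert)
    also have "\<dots> = (\<Sum>v\<in>?U. sg ?W u v * g (p v))"
      using sg1(1)[OF u] gb by simp
    also have "\<dots> = (\<Sum>v\<in>?U. sg (x @ y @ z) u v * g (p v))"
      by (rule sum.cong[OF refl]) (simp only: sgU[OF u])
    finally show ?thesis unfolding NN_def by simp
  qed
  have Nab: "NN g p ?W b = NN g p ?W a"
  proof -
    have "NN g p ?W b = sg ?W b a * g (p a) + (sg ?W b b * g (p b) + (\<Sum>v\<in>?U. sg ?W b v * g (p v)))"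
      unfolding NN_def sW using aU assms(7) by (simp add: sum.insert)
    also have "\<dots> = (\<Sum>v\<in>?U. sg ?W b v * g (p v))"
      using sgab by simp
    also have "\<dots> = (\<Sum>v\<in>?U. sg ?W a v * g (p v))"
      by (rule sum.cong[OF refl]) (simp only: sg1(2))
    also have "\<dots> = sg ?W a a * g (p a) + (sg ?W a b * g (p b) + (\<Sum>v\<in>?U. sg ?W a v * g (p v)))"
      using sgab by simp
    also have "\<dots> = NN g p ?W a"
      unfolding NN_def sW using aU assms(7) by (simp add: sum.insert)
    finally show ?thesis .
  qed
  have "TI f g \<phi> p ?W = f (p a) * \<phi> (NN g p ?W a) + (f (p b) * \<phi> (NN g p ?W b) + (\<Sum>u\<in>?U. f (p u) * \<phi> (NN g p ?W u)))"
    unfolding TI_def sW using aU assms(7) by (simp add: sum.insert)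
  also have "\<dots> = (\<Sum>u\<in>?U. f (p u) * \<phi> (NN g p ?W u))"
    using Nab fb by simp
  also have "\<dots> = (\<Sum>u\<in>?U. f (p u) * \<phi> (NN g p (x @ y @ z) u))"
    by (rule sum.cong[OF refl]) (simp only: NU)
  finally show ?thesis unfolding TI_def by simp
qed

lemma TI_H3:
  assumes "a \<notin> set x" "a \<notin> set y" "a \<notin> set z" "a \<notin> set t"
    "b \<notin> set x" "b \<notin> set y" "b \<notin> set z" "b \<notin> set t"
    "c \<notin> set x" "c \<notin> set y" "c \<notin> set z" "c \<notin> set t" "distinct [a,b,c]"
    and pab: "p a = p b" and pbc: "p b = p c"
  shows "TI f g \<phi> p (x @ [a,b] @ y @ [a,c] @ z @ [b,c] @ t) = TI f g \<phi> p (x @ [b,a] @ y @ [c,a] @ z @ [c,b] @ t)"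
proof -
  let ?W = "x @ [a,b] @ y @ [a,c] @ z @ [b,c] @ t" and ?W' = "x @ [b,a] @ y @ [c,a] @ z @ [c,b] @ t"
  let ?U = "set (x @ y @ z @ t)"
  note L = H3_lk[OF assms(1-13)]
  have sW: "set ?W = insert a (insert b (insert c ?U))" by auto
  have sW': "set ?W' = insert a (insert b (insert c ?U))" by auto
  have aU: "a \<notin> ?U" "b \<notin> ?U" "c \<notin> ?U" using assms by auto
  have dis: "a \<noteq> b" "a \<noteq> c" "b \<noteq> c" using assms(13) by auto
  have sgU: "sg ?W u v = sg ?W' u v" if "v \<in> ?U" for u v
  proof -
    have "v \<notin> {a,b,c}" using that aU by auto
    then show ?thesis unfolding sg_def using L(1)[of u v] L(1)[of v u] by auto
  qed
  have sgS: "sg ?W u a + sg ?W u b + sg ?W u c = sg ?W' u a + sg ?W' u b + sg ?W' u c" for u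
  proof (cases "u \<in> {a,b,c}")
    case True
    then show ?thesis using L(2-) unfolding sg_def by auto
  next
    case False
    then show ?thesis unfolding sg_def using L(1)[of u a] L(1)[of a u] L(1)[of u b] L(1)[of b u]
        L(1)[of u c] L(1)[of c u] by auto
  qed
  have N: "NN g p ?W u = NN g p ?W' u" for u
  proof -
    have "NN g p ?W u = (sg ?W u a + sg ?W u b + sg ?W u c) * g (p a) + (\<Sum>v\<in>?U. sg ?W u v * g (p v))"
      unfolding NN_def sW using aU dis pab pbc by (simp add: sum.insert algebra_simps)
    also have "\<dots> = (sg ?W' u a + sg ?W' u b + sg ?W' u c) * g (p a) + (\<Sum>v\<in>?U. sg ?W' u v * g (p v))"
      using sgS[of u] sgU by simp
    also have "\<dots> = NN g p ?W' u"
      unfolding NN_def sW' using aU dis pab pbc by (simp add: sum.insert algebra_simps)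
    finally show ?thesis .
  qed
  show ?thesis unfolding TI_def using N sW sW' by simp
qed



definition invP :: "'a set \<Rightarrow> 'a set \<Rightarrow> 'a nanoword \<Rightarrow> bool" where
  "invP S T n = (case n of (A, p, w) \<Rightarrow> even (PC S T p w))"

definition invT :: "('a \<Rightarrow> int) \<Rightarrow> ('a \<Rightarrow> int) \<Rightarrow> (int \<Rightarrow> int) \<Rightarrow> 'a nanoword \<Rightarrow> int" where
  "invT f g \<phi> n = (case n of (A, p, w) \<Rightarrow> TI f g \<phi> p w)"

lemma iso_data:
  assumes "is_nanoword (A1, p1, w1)" "nw_iso (A1, p1, w1) (A2, p2, w2)"
  obtains h where "inj_on h (set w1)" "\<forall>u\<in>set w1. p2 (h u) = p1 u" "w2 = map h w1"
proof -
  obtain h where h: "bij_betw h A1 A2" "\<forall>a\<in>A1. p2 (h a) = p1 a" "map h w1 = w2"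
    using assms(2) unfolding nw_iso_def by auto
  have "set w1 = A1" using nw_set[OF assms(1)] .
  then show ?thesis using that h bij_betw_imp_inj_on by metis
qed

lemma hstep_invP:
  assumes S: "\<And>x. \<tau> x \<in> S \<longleftrightarrow> x \<in> S" and T: "\<And>x. \<tau> x \<in> T \<longleftrightarrow> x \<in> T" and ST: "S \<inter> T = {}"
  shows "hstep \<tau> n m \<Longrightarrow> invP S T n = invP S T m"
proof (induction rule: hstep.induct)
  case (iso n1 n2)
  obtain A1 p1 w1 where n1: "n1 = (A1,p1,w1)" by (cases n1) auto
  obtain A2 p2 w2 where n2: "n2 = (A2,p2,w2)" by (cases n2) auto
  obtain h where "inj_on h (set w1)" "\<forall>u\<in>set w1. p2 (h u) = p1 u" "w2 = map h w1"
    using iso_data iso unfolding n1 n2 by metis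
  then show ?case unfolding n1 n2 invP_def using PC_map[of h w1 p2 p1 S T] by simp
next
  case (H1 A p x a y)
  have "PC S T p (x @ [a,a] @ y) = PC S T p (x @ y)" by (rule PC_H1[OF nw_H1_facts[OF H1]])
  then show ?case unfolding invP_def by simp
next
  case (H2 A p x a b y z)
  have "p a \<in> S \<longleftrightarrow> p b \<in> S" "p a \<in> T \<longleftrightarrow> p b \<in> T" using H2(2) S T by auto
  then have "even (PC S T p (x @ [a,b] @ y @ [b,a] @ z)) = even (PC S T p (x @ y @ z))"
    by (intro PC_H2[OF nw_H2_facts[OF H2(1)]])
  then show ?case unfolding invP_def by simp
next
  case (H3 A p x a b y c z t)
  have "PC S T p (x @ [a,b] @ y @ [a,c] @ z @ [b,c] @ t) = PC S T p (x @ [b,a] @ y @ [c,a] @ z @ [c,b] @ t)"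
    by (rule PC_H3[OF nw_H3_facts[OF H3(1,2)] H3(2-) ST])
  then show ?case unfolding invP_def by simp
qed

lemma hstep_invT:
  assumes f: "\<And>x. f (\<tau> x) = - f x" and g: "\<And>x. g (\<tau> x) = - g x" and \<phi>: "\<phi> 0 = 0"
  shows "hstep \<tau> n m \<Longrightarrow> invT f g \<phi> n = invT f g \<phi> m"
proof (induction rule: hstep.induct)
  case (iso n1 n2)
  obtain A1 p1 w1 where n1: "n1 = (A1,p1,w1)" by (cases n1) auto
  obtain A2 p2 w2 where n2: "n2 = (A2,p2,w2)" by (cases n2) auto
  obtain h where "inj_on h (set w1)" "\<forall>u\<in>set w1. p2 (h u) = p1 u" "w2 = map h w1"
    using iso_data iso unfolding n1 n2 by metis
  then show ?case unfolding n1 n2 invT_def using TI_map[of h w1 p2 p1 f g \<phi>] by simp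
next
  case (H1 A p x a y)
  have "TI f g \<phi> p (x @ [a,a] @ y) = TI f g \<phi> p (x @ y)" by (rule TI_H1[where \<phi>=\<phi>, OF nw_H1_facts[OF H1] \<phi>])
  then show ?case unfolding invT_def by simp
next
  case (H2 A p x a b y z)
  have "g (p b) = - g (p a)" "f (p b) = - f (p a)" using H2(2) f g by auto
  then have "TI f g \<phi> p (x @ [a,b] @ y @ [b,a] @ z) = TI f g \<phi> p (x @ y @ z)"
    by (intro TI_H2[OF nw_H2_facts[OF H2(1)]])
  then show ?case unfolding invT_def by simp
next
  case (H3 A p x a b y c z t)
  have "TI f g \<phi> p (x @ [a,b] @ y @ [a,c] @ z @ [b,c] @ t) = TI f g \<phi> p (x @ [b,a] @ y @ [c,a] @ z @ [c,b] @ t)"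
    by (rule TI_H3[OF nw_H3_facts[OF H3(1,2)] H3(2-)])
  then show ?case unfolding invT_def by simp
qed

lemma homotopic_invP:
  assumes "\<And>x. \<tau> x \<in> S \<longleftrightarrow> x \<in> S" "\<And>x. \<tau> x \<in> T \<longleftrightarrow> x \<in> T" "S \<inter> T = {}"
    and "homotopic \<tau> n m"
  shows "invP S T n = invP S T m"
  using homotopic_inv[of \<tau> "invP S T", OF hstep_invP[where S=S and T=T and \<tau>=\<tau>, OF assms(1-3)] assms(4)] by blast

lemma homotopic_invT:
  assumes "\<And>x. f (\<tau> x) = - f x" "\<And>x. g (\<tau> x) = - g x" "\<phi> 0 = 0"
    and "homotopic \<tau> n m"
  shows "invT f g \<phi> n = invT f g \<phi> m"
  using homotopic_inv[of \<tau> "invT f g \<phi>", OF hstep_invT[where f=f and g=g and \<phi>=\<phi> and \<tau>=\<tau>, OF assms(1-3)] assms(4)] by blast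

lemma lk_abab: assumes "u \<noteq> v" shows "lk [u,v,u,v] u v" "\<not> lk [u,v,u,v] v u" "\<not> lk [u,v,u,v] u u" "\<not> lk [u,v,u,v] v v"
  using assms by (auto simp: lk_def)

lemma set_abab: "set [u,v,u,v] = {u,v}" by auto

lemma PC_abab: "u \<noteq> v \<Longrightarrow> PC S T p [u,v,u,v] = (if p u \<in> S \<and> p v \<in> T then 1 else 0)"
  unfolding PC_def set_abab using lk_abab[of u v] by simp

lemma TI_abab: "u \<noteq> v \<Longrightarrow> TI f g \<phi> p [u,v,u,v] = f (p u) * \<phi> (g (p v)) + f (p v) * \<phi> (- g (p u))"
  unfolding TI_def NN_def sg_def set_abab using lk_abab[of u v] by simp

lemma PC_empty: "PC S T p [] = 0" by (simp add: PC_def)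
lemma TI_empty: "TI f g \<phi> p [] = 0" by (simp add: TI_def)



lemma classify:
  assumes "is_nanoword (A,p,w)" "length w \<le> 4"
  shows "w = [] \<or> (\<exists>u. w = [u,u]) \<or> (\<exists>u v. u \<noteq> v \<and> (w = [u,u,v,v] \<or> w = [u,v,v,u] \<or> w = [u,v,u,v]))"
proof -
  have c: "\<And>x. x \<in> set w \<Longrightarrow> count_list w x = 2" using nw_count[OF assms(1)] by blast
  have "length w = sum (count_list w) (set w)" by (simp add: sum_count_set)
  also have "\<dots> = sum (\<lambda>_. 2) (set w)" using c by (intro sum.cong) auto
  finally have ev: "even (length w)" by simp
  have "length w = 0 \<or> length w = 2 \<or> length w = 4" using assms(2) ev by presburger
  then show ?thesis
  proof (elim disjE)
    assume "length w = 0" then show ?thesis by simp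
  next
    assume "length w = 2"
    then obtain a b where w: "w = [a,b]" by (auto simp: length_Suc_conv numeral_eq_Suc)
    have "count_list [a,b] a = 2" using c[of a] w by simp
    then have "b = a" by (auto split: if_splits)
    then show ?thesis using w by simp
  next
    assume "length w = 4"
    then obtain a b d e where w: "w = [a,b,d,e]" by (auto simp: length_Suc_conv numeral_eq_Suc)
    have ca: "count_list [a,b,d,e] a = 2" using c[of a] w by simp
    have cb: "count_list [a,b,d,e] b = 2" using c[of b] w by simp
    have cd: "count_list [a,b,d,e] d = 2" using c[of d] w by simp
    consider "b = a" | "b \<noteq> a" "d = a" | "b \<noteq> a" "d \<noteq> a" by blast
    then show ?thesis
    proof cases
      case 1
      then have "d \<noteq> a" "e \<noteq> a" using ca by (auto split: if_splits)
      then have "e = d" using cd 1 by (auto split: if_splits)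
      then show ?thesis using w 1 \<open>d \<noteq> a\<close>
        by (intro disjI2 exI[of _ a] exI[of _ d]) simp
    next
      case 2
      then have "e \<noteq> a" using ca by (auto split: if_splits)
      then have "e = b" using cb 2 by (auto split: if_splits)
      then show ?thesis using w 2
        by (intro disjI2 exI[of _ a] exI[of _ b]) simp
    next
      case 3
      then have "e = a" using ca by (auto split: if_splits)
      then have "d = b" using cb 3 by (auto split: if_splits)
      then show ?thesis using w 3 \<open>e = a\<close>
        by (intro disjI2 exI[of _ a] exI[of _ b]) simp
    qed
  qed
qed

lemma empty_hom: "B = {} \<Longrightarrow> homotopic \<tau> (B, q, []) empty_nanoword"
  apply (rule homotopic_step)
  apply (rule hstep.iso)
  by (auto simp: is_nanoword_def empty_nanoword_def nw_iso_def)

lemma H1': "is_nanoword (A,p,W) \<Longrightarrow> W = x @ [a,a] @ y \<Longrightarrow> B = A - {a} \<Longrightarrow> W' = x @ y \<Longrightarrow> hstep \<tau> (A,p,W) (B,p,W')"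
  using hstep.H1 by blast
lemma H2': "is_nanoword (A,p,W) \<Longrightarrow> p b = \<tau> (p a) \<Longrightarrow> W = x @ [a,b] @ y @ [b,a] @ z \<Longrightarrow> B = A - {a,b}
   \<Longrightarrow> W' = x @ y @ z \<Longrightarrow> hstep \<tau> (A,p,W) (B,p,W')"
  using hstep.H2 by blast
lemma H3': "is_nanoword (A,p,W) \<Longrightarrow> distinct [a,b,c] \<Longrightarrow> p a = p b \<Longrightarrow> p b = p c \<Longrightarrow>
   W = x @ [a,b] @ y @ [a,c] @ z @ [b,c] @ t \<Longrightarrow> W' = x @ [b,a] @ y @ [c,a] @ z @ [c,b] @ t
   \<Longrightarrow> hstep \<tau> (A,p,W) (A,p,W')"
  using hstep.H3 by blast

lemma contr_sym:
  assumes "contractible \<tau> n"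
  shows "homot_symmetric \<tau> n" "homot_skew_symmetric \<tau> n"
proof -
  have h: "homotopic \<tau> n empty_nanoword" using assms unfolding contractible_def .
  have "homotopic \<tau> (nw_opposite n) (nw_opposite empty_nanoword)"
    by (rule homotopic_map[OF hstep_opp h])
  then have "homotopic \<tau> (nw_opposite n) empty_nanoword"
    by (simp add: nw_opposite_def empty_nanoword_def)
  then show "homot_symmetric \<tau> n" unfolding homot_symmetric_def
    using h homotopic_sym homotopic_trans by metis
  have "homotopic \<tau> (nw_opposite (nw_inverse \<tau> n)) (nw_opposite (nw_inverse \<tau> empty_nanoword))"
    by (rule homotopic_map[of \<tau> "\<lambda>n. nw_opposite (nw_inverse \<tau> n)", OF _ h])
       (intro hstep_opp hstep_inverse)
  moreover have "homotopic \<tau> (nw_opposite (nw_inverse \<tau> empty_nanoword)) empty_nanoword"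
    unfolding nw_opposite_def nw_inverse_def empty_nanoword_def
    by (simp add: empty_hom[unfolded empty_nanoword_def])
  ultimately show "homot_skew_symmetric \<tau> n" unfolding homot_skew_symmetric_def
    using h homotopic_sym homotopic_trans by metis
qed

lemma abab_contr:
  assumes inv: "\<And>x. \<tau> (\<tau> x) = x" and nw: "is_nanoword (A, p, [u,v,u,v])" and uv: "u \<noteq> v"
    and pv: "p v = \<tau> (p u)"
  shows "contractible \<tau> (A, p, [u,v,u,v])"
proof -
  define a where "a = p u"
  define q :: "nat \<Rightarrow> 'a" where "q = (\<lambda>i. if even i then a else \<tau> a)"
  have A: "A = {u,v}" using nw_set[OF nw] by auto
  let ?h = "\<lambda>c. if c = u then 0 else (1::nat)"
  have s0: "homotopic \<tau> (A, p, [u,v,u,v]) ({0,1}, q, [0,1,0,1])"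
  proof (rule homotopic_step, rule hstep.iso[OF nw])
    show "is_nanoword ({0::nat,1}, q, [0,1,0,1])" by (simp add: is_nanoword_def)
    have "bij_betw ?h A {0,1}" unfolding A bij_betw_def inj_on_def using uv by auto
    moreover have "\<forall>c\<in>A. q (?h c) = p c" unfolding A q_def a_def using uv pv by auto
    moreover have "map ?h [u,v,u,v] = [0,1,0,1]" using uv by simp
    ultimately show "nw_iso (A, p, [u,v,u,v]) ({0,1}, q, [0,1,0,1])"
      apply (simp only: nw_iso_def prod.case)
      apply (rule exI[where x="?h"])
      by blast
  qed
  have s1: "hstep \<tau> ({0,1,2,3}, q, [2,3,0,1,3,2,0,1]) ({0,1}, q, [0,1,0,1])"
    by (rule H2'[where x="[]" and a=2 and b=3 and y="[0,1]" and z="[0,1]"])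
       (auto simp: is_nanoword_def q_def)
  have s2: "hstep \<tau> ({0,1,2,3,4,5}, q, [2,4,5,3,0,1,3,2,0,1,5,4]) ({0,1,2,3}, q, [2,3,0,1,3,2,0,1])"
    by (rule H2'[where x="[2]" and a=4 and b=5 and y="[3,0,1,3,2,0,1]" and z="[]"])
       (auto simp: is_nanoword_def q_def)
  have s3: "hstep \<tau> ({0,1,2,3,4,5}, q, [2,4,3,5,0,3,1,2,0,5,1,4]) ({0,1,2,3,4,5}, q, [2,4,5,3,0,1,3,2,0,1,5,4])"
    by (rule H3'[where x="[2,4]" and a=3 and b=5 and y="[0]" and c=1 and z="[2,0]" and t="[4]"])
       (auto simp: is_nanoword_def q_def)
  have s4: "hstep \<tau> ({0,1,2,3,4,5}, q, [2,4,3,5,0,3,1,2,0,5,1,4]) ({1,2,3,4}, q, [2,4,3,3,1,2,1,4])"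
    by (rule H2'[where x="[2,4,3]" and a=5 and b=0 and y="[3,1,2]" and z="[1,4]"])
       (auto simp: is_nanoword_def q_def inv)
  have s5: "hstep \<tau> ({1,2,3,4}, q, [2,4,3,3,1,2,1,4]) ({1,2,4}, q, [2,4,1,2,1,4])"
    by (rule H1'[where x="[2,4]" and a=3 and y="[1,2,1,4]"])
       (auto simp: is_nanoword_def q_def)
  have s6: "hstep \<tau> ({1,2,4}, q, [2,4,1,2,1,4]) ({2}, q, [2,2])"
    by (rule H2'[where x="[2]" and a=4 and b=1 and y="[2]" and z="[]"])
       (auto simp: is_nanoword_def q_def)
  have s7: "hstep \<tau> ({2}, q, [2,2]) ({}, q, [])"
    by (rule H1'[where x="[]" and a=2 and y="[]"])
       (auto simp: is_nanoword_def q_def)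
  note tr = homotopic_trans[trans]
  have "homotopic \<tau> (A, p, [u,v,u,v]) ({0,1}, q, [0,1,0,1])" by (rule s0)
  also have "homotopic \<tau> \<dots> ({0,1,2,3}, q, [2,3,0,1,3,2,0,1])" by (rule homotopic_step_rev[OF s1])
  also have "homotopic \<tau> \<dots> ({0,1,2,3,4,5}, q, [2,4,5,3,0,1,3,2,0,1,5,4])" by (rule homotopic_step_rev[OF s2])
  also have "homotopic \<tau> \<dots> ({0,1,2,3,4,5}, q, [2,4,3,5,0,3,1,2,0,5,1,4])" by (rule homotopic_step_rev[OF s3])
  also have "homotopic \<tau> \<dots> ({1,2,3,4}, q, [2,4,3,3,1,2,1,4])" by (rule homotopic_step[OF s4])
  also have "homotopic \<tau> \<dots> ({1,2,4}, q, [2,4,1,2,1,4])" by (rule homotopic_step[OF s5])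
  also have "homotopic \<tau> \<dots> ({2}, q, [2,2])" by (rule homotopic_step[OF s6])
  also have "homotopic \<tau> \<dots> ({}, q, [])" by (rule homotopic_step[OF s7])
  finally have "homotopic \<tau> (A, p, [u,v,u,v]) ({}, q, [])" .
  then show ?thesis unfolding contractible_def using homotopic_trans[OF _ empty_hom[of "{}" \<tau> q]] by simp
qed



lemma abab_sym_iff:
  assumes nw: "is_nanoword (A, p, [u,v,u,v])" and uv: "u \<noteq> v"
  shows "nw_symmetric (A, p, [u,v,u,v]) \<longleftrightarrow> p u = p v"
proof
  assume "nw_symmetric (A, p, [u,v,u,v])"
  then obtain h where h: "\<forall>c\<in>A. p (h c) = p c" "map h [u,v,u,v] = rev [u,v,u,v]"
    unfolding nw_symmetric_def nw_opposite_def nw_iso_def prod.case by blast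
  have "u \<in> A" using nw_set[OF nw] by auto
  moreover have "h u = v" using h(2) by simp
  ultimately show "p u = p v" using h(1) by metis
next
  assume puv: "p u = p v"
  have A: "A = {u,v}" using nw_set[OF nw] by auto
  let ?h = "\<lambda>c. if c = u then v else u"
  have "inj_on ?h {u,v}" using uv unfolding inj_on_def by simp
  moreover have "?h ` {u,v} = {u,v}" using uv by auto
  ultimately have b: "bij_betw ?h A A" unfolding bij_betw_def A by blast
  have pp: "\<forall>c\<in>A. p (?h c) = p c"
  proof
    fix c assume "c \<in> A"
    then have "c = u \<or> c = v" using A by simp
    then show "p (?h c) = p c" using puv uv by (cases "c = u") simp_all
  qed
  have m: "map ?h [u,v,u,v] = rev [u,v,u,v]" using uv by simp
  show "nw_symmetric (A, p, [u,v,u,v])"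
    unfolding nw_symmetric_def nw_opposite_def nw_iso_def prod.case
    by (rule exI[where x="?h"]) (intro conjI b pp m)
qed

lemma tau_eq: assumes inv: "\<And>x. \<tau> (\<tau> x) = x" shows "\<tau> y = z \<longleftrightarrow> y = \<tau> z"
  using inv by metis

lemma abab_caseA:
  assumes inv: "\<And>x. \<tau> (\<tau> x) = x" and nw: "is_nanoword (A, p, [u,v,u,v])" and uv: "u \<noteq> v"
    and b1: "p v \<noteq> \<tau> (p u)" and b2: "p v \<noteq> p u"
  shows "\<not> contractible \<tau> (A, p, [u,v,u,v]) \<and> \<not> homot_skew_symmetric \<tau> (A, p, [u,v,u,v])
       \<and> \<not> homot_symmetric \<tau> (A, p, [u,v,u,v])"
proof -
  define a where "a = p u"
  define b where "b = p v"
  let ?n = "(A, p, [u,v,u,v])"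
  define S where "S = {a, \<tau> a}"
  define T where "T = {b, \<tau> b}"
  have e: "\<And>y z. \<tau> y = z \<longleftrightarrow> y = \<tau> z" using tau_eq[OF inv] by blast
  have cS: "\<tau> x \<in> S \<longleftrightarrow> x \<in> S" for x
    unfolding S_def using e[of x a] e[of x "\<tau> a"] inv[of a] by auto
  have cT: "\<tau> x \<in> T \<longleftrightarrow> x \<in> T" for x
    unfolding T_def using e[of x b] e[of x "\<tau> b"] inv[of b] by auto
  have bS: "b \<notin> S" "\<tau> b \<notin> S"
    unfolding S_def using b1 b2 e[of b a] e[of b "\<tau> a"] inv[of a] unfolding a_def b_def by auto
  have ST: "S \<inter> T = {}" unfolding T_def using bS by auto
  have opp: "nw_opposite ?n = (A, p, [v,u,v,u])" unfolding nw_opposite_def by simp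
  have skew: "nw_opposite (nw_inverse \<tau> ?n) = (A, \<tau> \<circ> p, [v,u,v,u])"
    unfolding nw_opposite_def nw_inverse_def by simp
  have vu: "v \<noteq> u" using uv by simp
  have aS: "p u \<in> S" unfolding S_def a_def by simp
  have bT: "p v \<in> T" unfolding T_def b_def by simp
  have Pn: "\<not> invP S T ?n" unfolding invP_def prod.case PC_abab[OF uv] using aS bT by simp
  have Pe: "invP S T empty_nanoword" unfolding invP_def empty_nanoword_def prod.case
    by (simp add: PC_empty)
  have Po: "invP S T (nw_opposite ?n)" unfolding opp invP_def prod.case PC_abab[OF vu]
    using bS unfolding b_def by simp
  have Ps: "invP S T (nw_opposite (nw_inverse \<tau> ?n))" unfolding skew invP_def prod.case PC_abab[OF vu]
    using bS unfolding b_def by simp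
  have "\<not> contractible \<tau> ?n" unfolding contractible_def
    using homotopic_invP[OF cS cT ST] Pn Pe by blast
  moreover have "\<not> homot_skew_symmetric \<tau> ?n" unfolding homot_skew_symmetric_def
    using homotopic_invP[OF cS cT ST] Pn Ps by blast
  moreover have "\<not> homot_symmetric \<tau> ?n" unfolding homot_symmetric_def
    using homotopic_invP[OF cS cT ST] Pn Po by blast
  ultimately show ?thesis by blast
qed

lemma abab_caseB:
  assumes inv: "\<And>x. \<tau> (\<tau> x) = x" and nw: "is_nanoword (A, p, [u,v,u,v])" and uv: "u \<noteq> v"
    and b1: "p v \<noteq> \<tau> (p u)" and b2: "p v = p u"
  shows "\<not> contractible \<tau> (A, p, [u,v,u,v]) \<and> \<not> homot_skew_symmetric \<tau> (A, p, [u,v,u,v])"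
proof -
  define a where "a = p u"
  let ?n = "(A, p, [u,v,u,v])"
  have e: "\<And>y z. \<tau> y = z \<longleftrightarrow> y = \<tau> z" using tau_eq[OF inv] by blast
  have ata: "\<tau> a \<noteq> a" using b1 b2 unfolding a_def by simp
  define \<chi> :: "'a \<Rightarrow> int" where "\<chi> = (\<lambda>x. if x = a then 1 else if x = \<tau> a then -1 else 0)"
  define \<phi> :: "int \<Rightarrow> int" where "\<phi> = (\<lambda>k. if k = 1 then 1 else 0)"
  have c\<chi>: "\<chi> (\<tau> x) = - \<chi> x" for x
    unfolding \<chi>_def using e[of x a] e[of x "\<tau> a"] inv[of a] ata by auto
  have \<phi>0: "\<phi> 0 = 0" unfolding \<phi>_def by simp
  have skew: "nw_opposite (nw_inverse \<tau> ?n) = (A, \<tau> \<circ> p, [v,u,v,u])"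
    unfolding nw_opposite_def nw_inverse_def by simp
  have vu: "v \<noteq> u" using uv by simp
  have pu: "p u = a" "p v = a" using b2 unfolding a_def by simp_all
  have ca: "\<chi> a = 1" "\<chi> (\<tau> a) = -1" unfolding \<chi>_def using ata by simp_all
  have Tn: "invT \<chi> \<chi> \<phi> ?n = 1" unfolding invT_def prod.case TI_abab[OF uv] pu ca
    unfolding \<phi>_def by simp
  have Te: "invT \<chi> \<chi> \<phi> empty_nanoword = 0" unfolding invT_def empty_nanoword_def prod.case
    by (simp add: TI_empty)
  have Ts: "invT \<chi> \<chi> \<phi> (nw_opposite (nw_inverse \<tau> ?n)) = -1" unfolding skew invT_def prod.case TI_abab[OF vu]
    o_def pu ca unfolding \<phi>_def by simp
  have "\<not> contractible \<tau> ?n" unfolding contractible_def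
    using homotopic_invT[where f=\<chi> and g=\<chi> and \<phi>=\<phi> and \<tau>=\<tau> and n="?n" and m=empty_nanoword, OF c\<chi> c\<chi> \<phi>0] Tn Te by auto
  moreover have "\<not> homot_skew_symmetric \<tau> ?n" unfolding homot_skew_symmetric_def
    using homotopic_invT[where f=\<chi> and g=\<chi> and \<phi>=\<phi> and \<tau>=\<tau> and n="?n" and m="nw_opposite (nw_inverse \<tau> ?n)", OF c\<chi> c\<chi> \<phi>0] Tn Ts by auto
  ultimately show ?thesis by blast
qed



theorem corollary8p4:
  fixes \<tau> :: "'a \<Rightarrow> 'a" and n :: "'a nanoword"
  assumes "\<And>x. \<tau> (\<tau> x) = x"
    and "is_nanoword n"
    and "nw_length n \<le> 4"
  shows "(homot_skew_symmetric \<tau> n \<longleftrightarrow> contractible \<tau> n)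
       \<and> (homot_symmetric \<tau> n \<longleftrightarrow> contractible \<tau> n \<or> nw_symmetric n)"
proof -
  note inv = assms(1)
  obtain A p w where n: "n = (A,p,w)" by (cases n) auto
  have nw: "is_nanoword (A,p,w)" using assms(2) n by simp
  have len: "length w \<le> 4" using assms(3) n by (simp add: nw_length_def)
  have A: "A = set w" using nw_set[OF nw] by simp
  have contr_case: "contractible \<tau> n \<Longrightarrow> ?thesis" using contr_sym[of \<tau> n] by blast
  consider "w = []" | u where "w = [u,u]"
    | u v where "u \<noteq> v" "w = [u,u,v,v]" | u v where "u \<noteq> v" "w = [u,v,v,u]"
    | u v where "u \<noteq> v" "w = [u,v,u,v]"
    using classify[OF nw len] by blast
  then show ?thesis
  proof cases
    case 1
    have "A = {}" using A 1 by simp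
    then have "contractible \<tau> n" unfolding contractible_def n 1 by (rule empty_hom)
    then show ?thesis by (rule contr_case)
  next
    case (2 u)
    have s1: "hstep \<tau> (A,p,[u,u]) ({},p,[])"
      by (rule H1'[where x="[]" and a=u and y="[]"]) (use nw 2 A in auto)
    have "contractible \<tau> n" unfolding contractible_def n 2
      by (rule homotopic_trans[OF homotopic_step[OF s1] empty_hom]) simp
    then show ?thesis by (rule contr_case)
  next
    case (3 u v)
    have s1: "hstep \<tau> (A,p,[u,u,v,v]) ({v},p,[v,v])"
      by (rule H1'[where x="[]" and a=u and y="[v,v]"]) (use nw 3 A in auto)
    have s2: "hstep \<tau> ({v},p,[v,v]) ({},p,[])"
      by (rule H1'[where x="[]" and a=v and y="[]"]) (auto simp: is_nanoword_def)
    have "contractible \<tau> n" unfolding contractible_def n 3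
      by (rule homotopic_trans[OF homotopic_step[OF s1] homotopic_trans[OF homotopic_step[OF s2] empty_hom]]) simp
    then show ?thesis by (rule contr_case)
  next
    case (4 u v)
    have s1: "hstep \<tau> (A,p,[u,v,v,u]) ({u},p,[u,u])"
      by (rule H1'[where x="[u]" and a=v and y="[u]"]) (use nw 4 A in auto)
    have s2: "hstep \<tau> ({u},p,[u,u]) ({},p,[])"
      by (rule H1'[where x="[]" and a=u and y="[]"]) (auto simp: is_nanoword_def)
    have "contractible \<tau> n" unfolding contractible_def n 4
      by (rule homotopic_trans[OF homotopic_step[OF s1] homotopic_trans[OF homotopic_step[OF s2] empty_hom]]) simp
    then show ?thesis by (rule contr_case)
  next
    case (5 u v)
    note uv = 5(1)
    have nw5: "is_nanoword (A, p, [u,v,u,v])" using nw 5 by simp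
    have n5: "n = (A, p, [u,v,u,v])" using n 5 by simp
    show ?thesis
    proof (cases "p v = \<tau> (p u)")
      case True
      have "contractible \<tau> n" unfolding n5 by (rule abab_contr[OF inv nw5 uv True])
      then show ?thesis by (rule contr_case)
    next
      case False
      show ?thesis
      proof (cases "p v = p u")
        case False2: False
        have "\<not> nw_symmetric n" unfolding n5 using abab_sym_iff[OF nw5 uv] False2 by auto
        then show ?thesis using abab_caseA[OF inv nw5 uv False False2] unfolding n5 by blast
      next
        case True2: True
        have sym: "nw_symmetric n" unfolding n5 using abab_sym_iff[OF nw5 uv] True2 by auto
        have "is_nanoword (nw_opposite n)" using nw5 unfolding n5 nw_opposite_def prod.case
          by (rule is_nanoword_rev)
        then have "hstep \<tau> n (nw_opposite n)"
          using hstep.iso[OF assms(2)] sym unfolding nw_symmetric_def by blast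
        then have "homot_symmetric \<tau> n" unfolding homot_symmetric_def by (rule homotopic_step)
        then show ?thesis using abab_caseB[OF inv nw5 uv False True2] sym unfolding n5 by blast
      qed
    qed
  qed
qed

end
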